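(* For every $n\in\mathbb{N}$ there exists a directed acyclic graph $D_n$ with $\operatorname{dbw}(D_n)\ge n$.
   Context: For a digraph $D$ and $X\subseteq E(D)$, $S^V_X=\{y: \exists x,z,\ \vec{xy}\in E(D)\setminus X,\ \vec{yz}\in X\}$. The directed branch-width $\operatorname{dbw}(D)$ is the minimum over pairs $(T,\beta)$ ($T$ a tree of maximum degree at most three, $\beta$ a bijection from the leaves of $T$ onto $E(D)$) of the maximum over edges $t$ of $T$ of $|S^V_{\beta(Y)}\cup S^V_{E(D)\setminus\beta(Y)}|$, where $Y$ is the set of leaves on one side of $T-t$ (width 0 if $T$ has no edges). *)

theory Defs
  imports Main
begin

definition is_dag :: "'a set \<Rightarrow> ('a \<times> 'a) set \<Rightarrow> bool" where
  "is_dag V E \<longleftrightarrow> finite V \<and> E \<subseteq> V \<times> V \<and> acyclic E"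

definition SV :: "('a \<times> 'a) set \<Rightarrow> ('a \<times> 'a) set \<Rightarrow> 'a set" where
  "SV E X = {y. \<exists>x z. (x, y) \<in> E - X \<and> (y, z) \<in> X}"

definition tadj :: "nat set set \<Rightarrow> (nat \<times> nat) set" where
  "tadj TE = {(u, v). {u, v} \<in> TE}"

definition is_tree :: "nat set \<Rightarrow> nat set set \<Rightarrow> bool" where
  "is_tree N TE \<longleftrightarrow> finite N \<and> N \<noteq> {} \<and>
     (\<forall>e\<in>TE. \<exists>u v. e = {u, v} \<and> u \<noteq> v \<and> u \<in> N \<and> v \<in> N) \<and>
     (\<forall>u\<in>N. \<forall>v\<in>N. (u, v) \<in> (tadj TE)\<^sup>*) \<and>
     (\<forall>e\<in>TE. \<forall>u v. e = {u, v} \<longrightarrow> (u, v) \<notin> (tadj (TE - {e}))\<^sup>*)"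

definition tdeg :: "nat set set \<Rightarrow> nat \<Rightarrow> nat" where
  "tdeg TE v = card {e\<in>TE. v \<in> e}"

text \<open>Leaves: nodes of degree at most one (so the single node of a one-node tree is a leaf).\<close>
definition tleaves :: "nat set \<Rightarrow> nat set set \<Rightarrow> nat set" where
  "tleaves N TE = {v\<in>N. tdeg TE v \<le> 1}"

definition is_branch_decomp :: "('a \<times> 'a) set \<Rightarrow> nat set \<Rightarrow> nat set set \<Rightarrow> (nat \<Rightarrow> 'a \<times> 'a) \<Rightarrow> bool" where
  "is_branch_decomp E N TE \<beta> \<longleftrightarrow> is_tree N TE \<and> (\<forall>v\<in>N. tdeg TE v \<le> 3) \<and>
     bij_betw \<beta> (tleaves N TE) E"

definition edge_width :: "('a \<times> 'a) set \<Rightarrow> nat set \<Rightarrow> nat set set \<Rightarrow> (nat \<Rightarrow> 'a \<times> 'a) \<Rightarrow> nat set \<Rightarrow> nat" where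
  "edge_width E N TE \<beta> t =
     (let a = (SOME a. \<exists>b. t = {a, b});
          Y = {y \<in> tleaves N TE. (a, y) \<in> (tadj (TE - {t}))\<^sup>*};
          X = \<beta> ` Y
      in card (SV E X \<union> SV E (E - X)))"

definition decomp_width :: "('a \<times> 'a) set \<Rightarrow> nat set \<Rightarrow> nat set set \<Rightarrow> (nat \<Rightarrow> 'a \<times> 'a) \<Rightarrow> nat" where
  "decomp_width E N TE \<beta> = Max (insert 0 (edge_width E N TE \<beta> ` TE))"

definition dbw :: "('a \<times> 'a) set \<Rightarrow> nat" where
  "dbw E = Inf {w. \<exists>N TE \<beta>. is_branch_decomp E N TE \<beta> \<and> w = decomp_width E N TE \<beta>}"

end

theory Submission
  imports Defs
begin


lemma arc_equiv:
  assumes "y \<notin> SV E X \<union> SV E (E - X)" "(x,y) \<in> E" "(y,z) \<in> E"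
  shows "(x,y) \<in> X \<longleftrightarrow> (y,z) \<in> X"
  using assms unfolding SV_def by blast

definition TT :: "nat \<Rightarrow> (nat \<times> nat) set" where
  "TT p = {(i,j). i < j \<and> j < p}"

lemma vertex_mono:
  assumes "y \<notin> SV (TT p) X \<union> SV (TT p) (TT p - X)" "0 < y" "y < p - 1"
    "e \<in> TT p" "fst e = y \<or> snd e = y"
  shows "e \<in> X \<longleftrightarrow> (y, p - 1) \<in> X"
proof -
  have o: "(y, p-1) \<in> TT p" and i: "(0,y) \<in> TT p" using assms(2,3) by (auto simp: TT_def)
  obtain a b where e: "e = (a,b)" by force
  show ?thesis
  proof (cases "b = y")
    case True
    then show ?thesis using arc_equiv[OF assms(1), of a "p-1"] o assms(4) e by auto
  next
    case False
    then have "a = y" using assms(5) e by auto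
    then show ?thesis using arc_equiv[OF assms(1), of 0 b] arc_equiv[OF assms(1), of 0 "p-1"] o i assms(4) e by auto
  qed
qed

lemma SV_sub: "SV E X \<subseteq> snd ` E" unfolding SV_def by force

lemma split_claim:
  assumes "X \<subseteq> TT p"
  defines "B \<equiv> SV (TT p) X \<union> SV (TT p) (TT p - X) \<union> {0, p - 1}"
  shows "X \<subseteq> B \<times> B \<or> TT p - X \<subseteq> B \<times> B"
proof (rule ccontr)
  assume "\<not> ?thesis"
  then obtain u v u' v' where uv: "(u,v) \<in> X" "\<not>(u \<in> B \<and> v \<in> B)"
    and uv': "(u',v') \<in> TT p - X" "\<not>(u' \<in> B \<and> v' \<in> B)" by auto
  obtain y where y: "y \<in> {u,v}" "y \<notin> B" using uv by auto
  obtain y' where y': "y' \<in> {u',v'}" "y' \<notin> B" using uv' by auto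
  have "(u,v) \<in> TT p" using uv assms(1) by auto
  then have yr: "0 < y" "y < p - 1" using y unfolding B_def TT_def by auto
  have yr': "0 < y'" "y' < p - 1" using y' uv' unfolding B_def TT_def by auto
  have nC: "y \<notin> SV (TT p) X \<union> SV (TT p) (TT p - X)" using y B_def by auto
  have nC': "y' \<notin> SV (TT p) X \<union> SV (TT p) (TT p - X)" using y' B_def by auto
  have h1: "(y,p-1) \<in> X" using vertex_mono[OF nC yr, of "(u,v)"] uv \<open>(u,v) \<in> TT p\<close> y by auto
  have h2: "(y',p-1) \<notin> X" using vertex_mono[OF nC' yr', of "(u',v')"] uv' y' by auto
  have ne: "y \<noteq> y'" using h1 h2 by auto
  define f where "f = (min y y', max y y')"
  have f: "f \<in> TT p" using ne yr yr' by (auto simp: f_def TT_def)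
  have "fst f = y \<or> snd f = y" by (auto simp: f_def min_def max_def)
  then have "f \<in> X \<longleftrightarrow> (y,p-1) \<in> X" using vertex_mono[OF nC yr f] by blast
  moreover have "fst f = y' \<or> snd f = y'" by (auto simp: f_def min_def max_def)
  then have "f \<in> X \<longleftrightarrow> (y',p-1) \<in> X" using vertex_mono[OF nC' yr' f] by blast
  ultimately show False using h1 h2 by auto
qed

lemma graph_lemma:
  assumes "X \<subseteq> TT p" "(n+2)^2 \<le> card X" "(n+2)^2 \<le> card (TT p - X)"
  shows "n \<le> card (SV (TT p) X \<union> SV (TT p) (TT p - X))"
proof (rule ccontr)
  let ?C = "SV (TT p) X \<union> SV (TT p) (TT p - X)"
  define B where "B = ?C \<union> {0, p - 1}"
  assume "\<not> ?thesis"
  then have cC: "card ?C < n" by simp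
  have fin: "finite (TT p)" by (rule finite_subset[of _ "{..<p} \<times> {..<p}"]) (auto simp: TT_def)
  have "finite ?C" using SV_sub[of "TT p"] fin by (meson finite_Un finite_imageI finite_subset)
  then have cB1: "card B \<le> n + 1"
    unfolding B_def using cC card_Un_le[of ?C "{0,p-1}"] card_insert_le[of "{p-1}" 0] by (simp add: card_insert_if) 
  have cB: "card (B \<times> B) \<le> (n+1)^2" unfolding card_cartesian_product power2_eq_square using mult_le_mono[OF cB1 cB1] by simp
  have fB: "finite (B \<times> B)" using \<open>finite ?C\<close> B_def by simp
  have "(n+1)^2 < (n+2)^2" by (simp add: power_strict_mono)
  have disj: "X \<subseteq> B \<times> B \<or> TT p - X \<subseteq> B \<times> B" using split_claim[OF assms(1)] unfolding B_def by simp
  from disj show False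
  proof
    assume "X \<subseteq> B \<times> B" then have "card X \<le> card (B \<times> B)" using fB card_mono B_def by metis
    then show False using cB assms(2) \<open>(n+1)^2 < (n+2)^2\<close> by linarith
  next
    assume "TT p - X \<subseteq> B \<times> B" then have "card (TT p - X) \<le> card (B \<times> B)" using fB card_mono B_def by metis
    then show False using cB assms(3) \<open>(n+1)^2 < (n+2)^2\<close> by linarith
  qed
qed



lemma tadj_sym: "(x,y) \<in> tadj F \<Longrightarrow> (y,x) \<in> tadj F"
  by (auto simp: tadj_def insert_commute)

lemma rtr_sym: "(x,y) \<in> (tadj F)\<^sup>* \<Longrightarrow> (y,x) \<in> (tadj F)\<^sup>*"
proof (induction rule: rtrancl_induct)
  case base then show ?case by simp
next
  case (step y z) then show ?case
    by (meson converse_rtrancl_into_rtrancl tadj_sym)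
qed

lemma tadj_mono: "F \<subseteq> G \<Longrightarrow> (tadj F)\<^sup>* \<subseteq> (tadj G)\<^sup>*"
  by (rule rtrancl_mono) (auto simp: tadj_def)

lemma last_hit: "(x,z) \<in> (tadj F)\<^sup>* \<Longrightarrow>
   (x,z) \<in> (tadj (F - {e}))\<^sup>* \<or> (\<exists>w\<in>e. (w,z) \<in> (tadj (F - {e}))\<^sup>*)"
proof (induction rule: rtrancl_induct)
  case base then show ?case by simp
next
  case (step y z)
  show ?case
  proof (cases "{y,z} = e")
    case True then show ?thesis by auto
  next
    case False
    then have "(y,z) \<in> tadj (F - {e})" using step(2) by (auto simp: tadj_def)
    then show ?thesis using step(3) by (meson rtrancl.rtrancl_into_rtrancl)
  qed
qed

lemma first_hit: "(x,z) \<in> (tadj F)\<^sup>* \<Longrightarrow>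
   (x,z) \<in> (tadj (F - {e}))\<^sup>* \<or> (\<exists>w\<in>e. (x,w) \<in> (tadj (F - {e}))\<^sup>*)"
proof (induction rule: rtrancl_induct)
  case base then show ?case by simp
next
  case (step y z)
  show ?case
  proof (cases "{y,z} = e")
    case True then show ?thesis using step(3) by auto
  next
    case False
    then have "(y,z) \<in> tadj (F - {e})" using step(2) by (auto simp: tadj_def)
    then show ?thesis using step(3) by (meson rtrancl.rtrancl_into_rtrancl)
  qed
qed

lemma out_of: "(b,y) \<in> (tadj F)\<^sup>* \<Longrightarrow>
   y = b \<or> (\<exists>c. {b,c} \<in> F \<and> (c,y) \<in> (tadj (F - {{b,c}}))\<^sup>*)"
proof (induction rule: rtrancl_induct)
  case base then show ?case by simp
next
  case (step z w)
  have zw: "{z,w} \<in> F" using step(2) by (simp add: tadj_def)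
  from step(3) show ?case
  proof
    assume "z = b" then show ?thesis using zw by auto
  next
    assume "\<exists>c. {b,c} \<in> F \<and> (c,z) \<in> (tadj (F - {{b,c}}))\<^sup>*"
    then obtain c where c: "{b,c} \<in> F" "(c,z) \<in> (tadj (F - {{b,c}}))\<^sup>*" by blast
    show ?thesis
    proof (cases "{z,w} = {b,c}")
      case False
      then have "(z,w) \<in> tadj (F - {{b,c}})" using zw by (auto simp: tadj_def)
      then show ?thesis using c by (meson rtrancl.rtrancl_into_rtrancl)
    next
      case True
      then have "(z = b \<and> w = c) \<or> (z = c \<and> w = b)" by (auto simp: doubleton_eq_iff)
      then show ?thesis using c by auto
    qed
  qed
qed

lemma tree_edges: "is_tree N TE \<Longrightarrow> \<forall>e\<in>TE. \<exists>u v. e = {u, v} \<and> u \<noteq> v \<and> u \<in> N \<and> v \<in> N"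
  unfolding is_tree_def by (elim conjE)

lemma tree_edge_ne: "is_tree N TE \<Longrightarrow> {u,v} \<in> TE \<Longrightarrow> u \<noteq> v \<and> u \<in> N \<and> v \<in> N"
proof -
  assume t: "is_tree N TE" and e: "{u,v} \<in> TE"
  obtain a b where "{u,v} = {a,b}" "a \<noteq> b" "a \<in> N" "b \<in> N" using tree_edges[OF t] e by blast
  then show ?thesis by (auto simp: doubleton_eq_iff)
qed

lemma tree_cut: "is_tree N TE \<Longrightarrow> {u,v} \<in> TE \<Longrightarrow> (u,v) \<notin> (tadj (TE - {{u,v}}))\<^sup>*"
proof -
  assume t: "is_tree N TE" and e: "{u,v} \<in> TE"
  have "\<forall>e\<in>TE. \<forall>u v. e = {u, v} \<longrightarrow> (u, v) \<notin> (tadj (TE - {e}))\<^sup>*" using t unfolding is_tree_def by (elim conjE)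
  then show ?thesis using e by blast
qed

lemma tree_conn: "is_tree N TE \<Longrightarrow> u \<in> N \<Longrightarrow> v \<in> N \<Longrightarrow> (u,v) \<in> (tadj TE)\<^sup>*"
  unfolding is_tree_def by (elim conjE) blast

lemma tree_finTE: "is_tree N TE \<Longrightarrow> finite TE"
proof -
  assume t: "is_tree N TE"
  have "TE \<subseteq> Pow N"
  proof
    fix e assume "e \<in> TE"
    then obtain a b where "e = {a,b}" "a \<in> N" "b \<in> N" using tree_edges[OF t] by blast
    then show "e \<in> Pow N" by auto
  qed
  moreover have "finite N" using t unfolding is_tree_def by (elim conjE)
  ultimately show ?thesis by (meson finite_Pow_iff finite_subset)
qed

lemma reach_in_N: "(u,z) \<in> (tadj F)\<^sup>* \<Longrightarrow> is_tree N TE \<Longrightarrow> F \<subseteq> TE \<Longrightarrow> u \<in> N \<Longrightarrow> z \<in> N"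
proof (induction rule: rtrancl_induct)
  case base then show ?case by simp
next
  case (step y z) then show ?case using tree_edge_ne[of N TE y z] by (auto simp: tadj_def)
qed

definition side :: "nat set \<Rightarrow> nat set set \<Rightarrow> nat set \<Rightarrow> nat \<Rightarrow> nat set" where
  "side N TE t x = {y \<in> tleaves N TE. (x,y) \<in> (tadj (TE - {t}))\<^sup>*}"

definition nodes :: "nat set set \<Rightarrow> nat set \<Rightarrow> nat \<Rightarrow> nat set" where
  "nodes TE t x = {z. (x,z) \<in> (tadj (TE - {t}))\<^sup>*}"

lemma sides_partition:
  assumes t: "is_tree N TE" and e: "{u,v} \<in> TE"
  shows "side N TE {u,v} u \<union> side N TE {u,v} v = tleaves N TE"
    "side N TE {u,v} u \<inter> side N TE {u,v} v = {}"
proof -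
  show "side N TE {u,v} u \<union> side N TE {u,v} v = tleaves N TE"
  proof
    show "side N TE {u, v} u \<union> side N TE {u, v} v \<subseteq> tleaves N TE" by (auto simp: side_def)
    show "tleaves N TE \<subseteq> side N TE {u, v} u \<union> side N TE {u, v} v"
    proof
      fix y assume y: "y \<in> tleaves N TE"
      then have "y \<in> N" by (simp add: tleaves_def)
      then have "(u,y) \<in> (tadj TE)\<^sup>*" using tree_conn[OF t] tree_edge_ne[OF t e] by blast
      from last_hit[OF this, of "{u,v}"] show "y \<in> side N TE {u, v} u \<union> side N TE {u, v} v"
        using y by (auto simp: side_def)
    qed
  qed
  show "side N TE {u,v} u \<inter> side N TE {u,v} v = {}"
  proof (rule ccontr)
    assume "\<not> ?thesis"
    then obtain y where "(u,y) \<in> (tadj (TE - {{u,v}}))\<^sup>*" "(v,y) \<in> (tadj (TE - {{u,v}}))\<^sup>*"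
      by (auto simp: side_def)
    then have "(u,v) \<in> (tadj (TE - {{u,v}}))\<^sup>*" by (meson rtr_sym rtrancl_trans)
    then show False using tree_cut[OF t e] by simp
  qed
qed



lemma leaves_fin: "is_tree N TE \<Longrightarrow> finite (tleaves N TE)"
  unfolding tleaves_def is_tree_def by auto

lemma side_card_compl:
  assumes t: "is_tree N TE" and e: "{u,v} \<in> TE"
  shows "card (side N TE {u,v} u) + card (side N TE {u,v} v) = card (tleaves N TE)"
  using sides_partition[OF t e] leaves_fin[OF t]
  by (metis card_Un_disjoint finite_Un)

lemma balanced:
  assumes t: "is_tree N TE" and deg: "\<forall>v\<in>N. tdeg TE v \<le> 3" and k: "1 \<le> k"
    and L: "3 * k \<le> card (tleaves N TE)"
  shows "\<exists>u v. {u,v} \<in> TE \<and> k \<le> card (side N TE {u,v} u) \<and> k \<le> card (side N TE {u,v} v)"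
proof -
  define L where "L = card (tleaves N TE)"
  have finTE: "finite TE" using tree_finTE[OF t] .
  have finN: "finite N" using t unfolding is_tree_def by (elim conjE)
  define P where "P = (\<lambda>(a,b). {a,b} \<in> TE \<and> L - k < card (side N TE {a,b} b))"
  show ?thesis
  proof (cases "\<exists>ab. P ab")
    case False
    have "2 \<le> card (tleaves N TE)" using L k by linarith
    then obtain y1 y2 where y: "y1 \<in> tleaves N TE" "y2 \<in> tleaves N TE" "y1 \<noteq> y2"
    proof -
      have "\<not> card (tleaves N TE) \<le> Suc 0" using \<open>2 \<le> card (tleaves N TE)\<close> by simp
      then show ?thesis using that unfolding card_le_Suc0_iff_eq[OF leaves_fin[OF t]] by blast
    qed
    then have "(y1,y2) \<in> (tadj TE)\<^sup>*" using tree_conn[OF t] by (auto simp: tleaves_def)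
    then obtain w where "(y1,w) \<in> tadj TE" using y(3) by (metis converse_rtranclE)
    then have e: "{y1,w} \<in> TE" by (simp add: tadj_def)
    have "\<not> P (y1,w)" "\<not> P (w,y1)" using False by auto
    then have c1: "card (side N TE {y1,w} w) \<le> L - k" and c2: "card (side N TE {y1,w} y1) \<le> L - k"
      using e by (auto simp: P_def insert_commute)
    have "card (side N TE {y1,w} y1) + card (side N TE {y1,w} w) = L"
      using side_card_compl[OF t e] L_def by simp
    then have "k \<le> card (side N TE {y1,w} y1) \<and> k \<le> card (side N TE {y1,w} w)" using c1 c2 L L_def by linarith
    then show ?thesis using e by blast
  next
    case True
    then obtain ab where "P ab" by blast
    from ex_has_least_nat[of P ab "\<lambda>(a,b). card (nodes TE {a,b} b)", OF this]
    obtain a b where Pab: "P (a,b)" and minab: "\<And>c d. P (c,d) \<Longrightarrow> card (nodes TE {a,b} b) \<le> card (nodes TE {c,d} d)"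
      by (metis (no_types, lifting) case_prod_conv old.prod.exhaust)
    define t' where "t' = {a,b}"
    have tE: "t' \<in> TE" and big: "L - k < card (side N TE t' b)" using Pab by (auto simp: P_def t'_def)
    have abN: "a \<noteq> b" "a \<in> N" "b \<in> N" using tree_edge_ne[OF t tE[unfolded t'_def]] by auto
    define S where "S = side N TE t' b"
    have "\<not> S \<subseteq> {b}"
    proof
      assume "S \<subseteq> {b}" then have "card S \<le> card {b}" by (intro card_mono) auto
      then have "card S \<le> 1" by simp
      moreover have "L - k < card S" using big S_def by simp
      ultimately show False using L k L_def by linarith
    qed
    then obtain y0 where y0: "y0 \<in> S" "y0 \<noteq> b" by blast
    then have "(b,y0) \<in> (tadj (TE - {t'}))\<^sup>*" by (simp add: S_def side_def)
    from out_of[OF this] y0 obtain c0 where c0: "{b,c0} \<in> TE - {t'}" by blast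
    have "{t', {b,c0}} \<subseteq> {e\<in>TE. b \<in> e}" using tE c0 by (auto simp: t'_def)
    then have "card {t', {b,c0}} \<le> tdeg TE b" unfolding tdeg_def by (rule card_mono[rotated]) (use finTE in simp)
    moreover have "t' \<noteq> {b,c0}" using c0 by blast
    then have "card {t', {b,c0}} = 2" by simp
    ultimately have bnl: "b \<notin> tleaves N TE" by (simp add: tleaves_def)
    define Nb where "Nb = {c. {b,c} \<in> TE \<and> {b,c} \<noteq> t'}"
    have Scov: "S \<subseteq> (\<Union>c\<in>Nb. side N TE {b,c} c)"
    proof
      fix y assume y: "y \<in> S"
      then have yl: "y \<in> tleaves N TE" "(b,y) \<in> (tadj (TE - {t'}))\<^sup>*" by (auto simp: S_def side_def)
      then have "y \<noteq> b" using bnl by auto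
      with out_of[OF yl(2)] obtain c where c: "{b,c} \<in> TE - {t'}" "(c,y) \<in> (tadj (TE - {t'} - {{b,c}}))\<^sup>*" by blast
      have "(c,y) \<in> (tadj (TE - {{b,c}}))\<^sup>*" using c(2) tadj_mono[of "TE - {t'} - {{b,c}}" "TE - {{b,c}}"] by blast
      then show "y \<in> (\<Union>c\<in>Nb. side N TE {b,c} c)" using c(1) yl(1) by (auto simp: Nb_def side_def)
    qed
    have injNb: "inj_on (\<lambda>c. {b,c}) Nb" by (rule inj_onI) (auto simp: doubleton_eq_iff)
    have imNb: "(\<lambda>c. {b,c}) ` Nb \<subseteq> {e\<in>TE. b \<in> e} - {t'}" by (auto simp: Nb_def)
    have "card ({e\<in>TE. b \<in> e} - {t'}) = tdeg TE b - 1" unfolding tdeg_def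
      using tE by (simp add: t'_def)
    then have "card ({e\<in>TE. b \<in> e} - {t'}) \<le> 2" using deg abN by fastforce
    then have cNb: "card Nb \<le> 2" using card_inj_on_le[OF injNb imNb] finTE by simp
    have finNb: "finite Nb" using inj_on_finite[OF injNb imNb] finTE by simp
    obtain c where cNb': "c \<in> Nb" and ck: "k \<le> card (side N TE {b,c} c)"
    proof (rule ccontr)
      assume "\<not> thesis"
      then have lt: "\<forall>c\<in>Nb. card (side N TE {b,c} c) \<le> k - 1" using that by fastforce
      have finU: "finite (\<Union>c\<in>Nb. side N TE {b,c} c)"
        by (rule finite_subset[OF _ leaves_fin[OF t]]) (auto simp: side_def)
      have c1: "card S \<le> (\<Sum>c\<in>Nb. card (side N TE {b,c} c))"
        using card_mono[OF finU Scov] card_UN_le[OF finNb, of "\<lambda>c. side N TE {b,c} c"] by linarith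
      have c2: "(\<Sum>c\<in>Nb. card (side N TE {b,c} c)) \<le> card Nb * (k - 1)" using sum_bounded_above[of Nb _ "k-1"] lt by simp
      have c3: "card Nb * (k - 1) \<le> 2 * (k - 1)" using cNb by simp
      have "L - k < card S" using big S_def by simp
      then show False using c1 c2 c3 L k L_def by linarith
    qed
    have c: "{b,c} \<in> TE" "{b,c} \<noteq> t'" using cNb' by (auto simp: Nb_def)
    have bc: "b \<noteq> c" "c \<noteq> a" using tree_edge_ne[OF t c(1)] c(2) by (auto simp: t'_def)
    have small: "card (side N TE {b,c} c) \<le> L - k"
    proof (rule ccontr)
      assume "\<not> ?thesis"
      then have "P (b,c)" using c by (auto simp: P_def)
      then have le: "card (nodes TE {a,b} b) \<le> card (nodes TE {b,c} c)" by (rule minab)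
      have sub: "nodes TE {b,c} c \<subseteq> nodes TE t' b"
      proof
        fix z assume "z \<in> nodes TE {b,c} c"
        then have "(c,z) \<in> (tadj (TE - {{b,c}}))\<^sup>*" by (simp add: nodes_def)
        from first_hit[OF this, of t'] show "z \<in> nodes TE t' b"
        proof
          assume h: "(c,z) \<in> (tadj (TE - {{b,c}} - {t'}))\<^sup>*"
          have "(b,c) \<in> tadj (TE - {t'})" using c by (auto simp: tadj_def)
          moreover have "(c,z) \<in> (tadj (TE - {t'}))\<^sup>*" using h tadj_mono[of "TE - {{b,c}} - {t'}" "TE - {t'}"] by blast
          ultimately show ?thesis by (simp add: nodes_def converse_rtrancl_into_rtrancl)
        next
          assume "\<exists>w\<in>t'. (c,w) \<in> (tadj (TE - {{b,c}} - {t'}))\<^sup>*"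
          then obtain w where w: "w \<in> {a,b}" "(c,w) \<in> (tadj (TE - {{b,c}}))\<^sup>*"
            using tadj_mono[of "TE - {{b,c}} - {t'}" "TE - {{b,c}}"] by (auto simp: t'_def)
          have "(c,b) \<in> (tadj (TE - {{b,c}}))\<^sup>*"
          proof (cases "w = b")
            case True then show ?thesis using w by simp
          next
            case False then have "w = a" using w by simp
            moreover have "(a,b) \<in> tadj (TE - {{b,c}})" using tE c(2) by (auto simp: tadj_def t'_def)
            ultimately show ?thesis using w by (meson rtrancl.rtrancl_into_rtrancl)
          qed
          then have "(b,c) \<in> (tadj (TE - {{b,c}}))\<^sup>*" by (rule rtr_sym)
          then show ?thesis using tree_cut[OF t c(1)] by simp
        qed
      qed
      have bin: "b \<in> nodes TE t' b" by (simp add: nodes_def)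
      have bout: "b \<notin> nodes TE {b,c} c" using tree_cut[OF t c(1)] rtr_sym by (auto simp: nodes_def)
      have finn: "finite (nodes TE t' b)"
        proof (rule finite_subset[OF _ finN])
        show "nodes TE t' b \<subseteq> N"
        proof
          fix z assume "z \<in> nodes TE t' b"
          then have "(b,z) \<in> (tadj (TE - {t'}))\<^sup>*" by (simp add: nodes_def)
          then show "z \<in> N" using reach_in_N[OF _ t _ abN(3)] by blast
        qed
      qed
      have "card (nodes TE {b,c} c) < card (nodes TE t' b)"
        proof (rule psubset_card_mono[OF finn])
        show "nodes TE {b,c} c \<subset> nodes TE t' b" using sub bin bout by blast
      qed
      then show False using le t'_def by simp
    qed
    have "card (side N TE {b,c} b) + card (side N TE {b,c} c) = L" using side_card_compl[OF t c(1)] L_def by simp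
    then have "k \<le> card (side N TE {b,c} b) \<and> k \<le> card (side N TE {b,c} c)" using small ck L L_def by linarith
    then show ?thesis using c(1) by blast
  qed
qed



definition catN :: "nat \<Rightarrow> nat set" where "catN m = {..<2*m}"
definition catE :: "nat \<Rightarrow> nat set set" where
  "catE m = {e. \<exists>i<m. e = {i, m+i}} \<union> {e. \<exists>i. Suc i < m \<and> e = {m+i, Suc (m+i)}}"

lemma closed_reach: "(x,y) \<in> (tadj F)\<^sup>* \<Longrightarrow> x \<in> C \<Longrightarrow> (\<forall>a b. a\<in>C \<longrightarrow> {a,b} \<in> F \<longrightarrow> b \<in> C) \<Longrightarrow> y \<in> C"
proof (induction rule: rtrancl_induct)
  case base then show ?case by simp
next
  case (step y z) then show ?case by (auto simp: tadj_def)
qed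

lemma spine: "i < m \<Longrightarrow> (m, m+i) \<in> (tadj (catE m))\<^sup>*"
proof (induction i)
  case 0 then show ?case by simp
next
  case (Suc i)
  have "(m+i, m + Suc i) \<in> tadj (catE m)" using Suc(2) unfolding tadj_def catE_def by auto
  then show ?case using Suc by (meson Suc_lessD rtrancl.rtrancl_into_rtrancl)
qed

lemma to_root: "u \<in> catN m \<Longrightarrow> (u, m) \<in> (tadj (catE m))\<^sup>*"
proof (cases "u < m")
  case True
  have "(u, m+u) \<in> tadj (catE m)" using True unfolding tadj_def catE_def by auto
  moreover have "(m+u, m) \<in> (tadj (catE m))\<^sup>*" using spine[OF True] rtr_sym by blast
  ultimately show ?thesis by (meson converse_rtrancl_into_rtrancl)
next
  case False
  assume "u \<in> catN m"
  then have "u - m < m" "u = m + (u - m)" using False by (auto simp: catN_def)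
  then show ?thesis using spine[of "u-m" m] rtr_sym by metis
qed

lemma cut_leaf:
  assumes "i < m" shows "(i, m+i) \<notin> (tadj (catE m - {{i, m+i}}))\<^sup>*"
proof
  assume h: "(i, m+i) \<in> (tadj (catE m - {{i, m+i}}))\<^sup>*"
  have "\<forall>a b. a \<in> {i} \<longrightarrow> {a,b} \<in> catE m - {{i, m+i}} \<longrightarrow> b \<in> {i}"
    using assms unfolding catE_def by (auto simp: doubleton_eq_iff)
  from closed_reach[OF h _ this] show False using assms by simp
qed

lemma cut_spine:
  assumes "Suc i < m" shows "(m+i, Suc (m+i)) \<notin> (tadj (catE m - {{m+i, Suc (m+i)}}))\<^sup>*"
proof
  assume h: "(m+i, Suc (m+i)) \<in> (tadj (catE m - {{m+i, Suc (m+i)}}))\<^sup>*"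
  define C where "C = {x. x \<le> i \<or> (m \<le> x \<and> x \<le> m+i)}"
  have "\<forall>a b. a \<in> C \<longrightarrow> {a,b} \<in> catE m - {{m+i, Suc (m+i)}} \<longrightarrow> b \<in> C"
    using assms unfolding catE_def C_def by (auto simp: doubleton_eq_iff)
  from closed_reach[OF h _ this] show False by (simp add: C_def)
qed

lemma cat_tree: assumes "2 \<le> m" shows "is_tree (catN m) (catE m)"
  unfolding is_tree_def
proof (intro conjI ballI allI impI)
  show "finite (catN m)" by (simp add: catN_def)
  have "0 \<in> catN m" using assms by (simp add: catN_def)
  then show "catN m \<noteq> {}" by blast
next
  fix e assume "e \<in> catE m"
  then consider (a) i where "i<m" "e={i,m+i}" | (b) i where "Suc i < m" "e = {m+i, Suc(m+i)}"
    by (auto simp: catE_def)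
  then show "\<exists>u v. e = {u, v} \<and> u \<noteq> v \<and> u \<in> catN m \<and> v \<in> catN m"
  proof cases
    case (a i) then show ?thesis by (rule_tac exI[of _ i], rule_tac exI[of _ "m+i"]) (auto simp: catN_def)
  next
    case (b i) then show ?thesis by (rule_tac exI[of _ "m+i"], rule_tac exI[of _ "Suc (m+i)"]) (auto simp: catN_def)
  qed
next
  fix u v assume "u \<in> catN m" "v \<in> catN m"
  then show "(u, v) \<in> (tadj (catE m))\<^sup>*" using to_root rtr_sym by (meson rtrancl_trans)
next
  fix e u v assume e: "e \<in> catE m" and uv: "e = {u, v}"
  show "(u, v) \<notin> (tadj (catE m - {e}))\<^sup>*"
  proof -
    have "\<exists>a b. e = {a,b} \<and> (a,b) \<notin> (tadj (catE m - {e}))\<^sup>*"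
      using e cut_leaf cut_spine unfolding catE_def by blast
    then obtain a b where ab: "e = {a,b}" "(a,b) \<notin> (tadj (catE m - {e}))\<^sup>*" by blast
    then have "(u = a \<and> v = b) \<or> (u = b \<and> v = a)" using uv by (auto simp: doubleton_eq_iff)
    then show ?thesis using ab rtr_sym by blast
  qed
qed

lemma cat_fin: "finite (catE m)"
  by (rule finite_subset[of _ "Pow {..<2*m}"]) (auto simp: catE_def)

lemma cat_deg_leaf: assumes "v < m" shows "{e\<in>catE m. v \<in> e} = {{v, m+v}}"
  using assms unfolding catE_def by auto

lemma cat_deg_spine: assumes "i < m"
  shows "{e\<in>catE m. m+i \<in> e} \<subseteq> {{i, m+i}, {m+i, Suc (m+i)}, {m+(i-1), m+i}}"
  using assms unfolding catE_def by (auto simp: doubleton_eq_iff)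

lemma card3: "card {a, b, c::'x} \<le> 3"
  by (simp add: card_insert_if)

lemma cat_deg: assumes "2 \<le> m" "v \<in> catN m" shows "tdeg (catE m) v \<le> 3"
proof (cases "v < m")
  case True then show ?thesis by (simp add: tdeg_def cat_deg_leaf)
next
  case False
  define i where "i = v - m"
  have i: "i < m" "v = m + i" using assms False by (auto simp: catN_def i_def)
  show ?thesis unfolding tdeg_def i(2)
    using card_mono[OF _ cat_deg_spine[OF i(1)]] card3 by (meson finite.emptyI finite.insertI le_trans)
qed

lemma cat_leaves: assumes "2 \<le> m" shows "tleaves (catN m) (catE m) = {..<m}"
proof -
  have "v \<notin> tleaves (catN m) (catE m)" if v: "\<not> v < m" for v
  proof (cases "v \<in> catN m")
    case False then show ?thesis by (simp add: tleaves_def)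
  next
    case True
    define i where "i = v - m"
    have i: "i < m" "v = m + i" using True v by (auto simp: catN_def i_def)
    obtain e2 where e2: "e2 \<in> catE m" "v \<in> e2" "e2 \<noteq> {i, m+i}"
    proof (cases "Suc i < m")
      case True
      show ?thesis by (rule that[of "{m+i, Suc (m+i)}"]) (use True i in \<open>auto simp: catE_def doubleton_eq_iff\<close>)
    next
      case False
      then have "i \<ge> 1" using i assms by linarith
      then show ?thesis by (intro that[of "{m+(i-1), m+i}"]) (use i in \<open>auto simp: catE_def doubleton_eq_iff intro: exI[of _ "i-1"]\<close>)
    qed
    have e1: "{i, m+i} \<in> catE m" using i by (auto simp: catE_def)
    have "{{i, m+i}, e2} \<subseteq> {e\<in>catE m. v \<in> e}" using e1 e2 i by auto
    then have "card {{i, m+i}, e2} \<le> tdeg (catE m) v" unfolding tdeg_def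
      by (rule card_mono[rotated]) (simp add: cat_fin)
    moreover have "card {{i, m+i}, e2} = 2" using e2(3) by simp
    ultimately show ?thesis by (simp add: tleaves_def)
  qed
  moreover have "v \<in> tleaves (catN m) (catE m)" if "v < m" for v
    using that by (simp add: tleaves_def tdeg_def cat_deg_leaf catN_def)
  ultimately show ?thesis by auto
qed



lemma TT_acyclic: "acyclic (TT p)"
proof -
  have "(TT p)\<^sup>+ \<subseteq> {(x,y). x < y}"
  proof
    fix z assume "z \<in> (TT p)\<^sup>+"
    then obtain x y where z: "z = (x,y)" "(x,y) \<in> (TT p)\<^sup>+" by (cases z) auto
    from z(2) have "x < y" by (induction rule: trancl_induct) (auto simp: TT_def)
    then show "z \<in> {(x,y). x < y}" using z by simp
  qed
  then show ?thesis unfolding acyclic_def by blast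
qed

lemma width_bound:
  assumes d: "is_branch_decomp (TT p) N TE \<beta>" and k: "k = (n+2)^2"
    and L: "3 * k \<le> card (TT p)"
  shows "n \<le> decomp_width (TT p) N TE \<beta>"
proof -
  have t: "is_tree N TE" and deg: "\<forall>v\<in>N. tdeg TE v \<le> 3" and bij: "bij_betw \<beta> (tleaves N TE) (TT p)"
    using d unfolding is_branch_decomp_def by auto
  have cl: "card (tleaves N TE) = card (TT p)" using bij_betw_same_card[OF bij] .
  have "1 \<le> k" using k by simp
  from balanced[OF t deg this] L cl obtain u v where uv: "{u,v} \<in> TE"
    "k \<le> card (side N TE {u,v} u)" "k \<le> card (side N TE {u,v} v)" by auto
  define a where "a = (SOME a. \<exists>b. {u,v} = {a, b})"
  have "\<exists>b. {u,v} = {a, b}" unfolding a_def by (rule someI_ex) blast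
  then obtain a' where aa': "{u,v} = {a,a'}" by blast
  have ka: "k \<le> card (side N TE {a,a'} a)" "k \<le> card (side N TE {a,a'} a')"
    using uv aa' by (auto simp: doubleton_eq_iff)
  have e: "{a,a'} \<in> TE" using uv aa' by simp
  define Y where "Y = side N TE {a,a'} a"
  have Yl: "Y \<subseteq> tleaves N TE" by (auto simp: Y_def side_def)
  have compl: "tleaves N TE - Y = side N TE {a,a'} a'"
  proof -
    have "side N TE {a,a'} a \<union> side N TE {a,a'} a' = tleaves N TE"
      "side N TE {a,a'} a \<inter> side N TE {a,a'} a' = {}" using sides_partition[OF t e] by auto
    then show ?thesis unfolding Y_def by blast
  qed
  have inj: "inj_on \<beta> (tleaves N TE)" using bij_betw_imp_inj_on[OF bij] .
  have X1: "card (\<beta> ` Y) = card Y" using card_image[OF inj_on_subset[OF inj Yl]] .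
  have im: "\<beta> ` tleaves N TE = TT p" using bij_betw_imp_surj_on[OF bij] .
  have X2: "TT p - \<beta> ` Y = \<beta> ` (tleaves N TE - Y)"
    using inj_on_image_set_diff[OF inj _ Yl] im by simp
  have X3: "card (\<beta> ` (tleaves N TE - Y)) = card (tleaves N TE - Y)"
    using card_image[OF inj_on_subset[OF inj Diff_subset]] .
  have Xs: "\<beta> ` Y \<subseteq> TT p" using Yl im by blast
  have w: "n \<le> card (SV (TT p) (\<beta> ` Y) \<union> SV (TT p) (TT p - \<beta> ` Y))"
    by (rule graph_lemma[OF Xs]) (use X1 X2 X3 compl ka k Y_def in auto)
  have ew: "edge_width (TT p) N TE \<beta> {u,v} = card (SV (TT p) (\<beta> ` (side N TE {u,v} a)) \<union> SV (TT p) (TT p - \<beta> ` (side N TE {u,v} a)))"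
    unfolding edge_width_def Let_def side_def a_def by simp
  have "edge_width (TT p) N TE \<beta> {u,v} = card (SV (TT p) (\<beta> ` Y) \<union> SV (TT p) (TT p - \<beta> ` Y))"
    using ew unfolding Y_def aa' by simp
  with w have "n \<le> edge_width (TT p) N TE \<beta> {u,v}" by simp
  also have "\<dots> \<le> decomp_width (TT p) N TE \<beta>" unfolding decomp_width_def
    using uv(1) tree_finTE[OF t] by (intro Max_ge) auto
  finally show ?thesis .
qed

theorem mainTheorem14:
  fixes n :: nat
  shows "\<exists>(V :: nat set) (E :: (nat \<times> nat) set). is_dag V E \<and> dbw E \<ge> n"
proof -
  define k where "k = (n+2)^2"
  define p where "p = 3*k + 2"
  have dag: "is_dag {..<p} (TT p)" unfolding is_dag_def using TT_acyclic by (auto simp: TT_def)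
  have fin: "finite (TT p)" by (rule finite_subset[of _ "{..<p} \<times> {..<p}"]) (auto simp: TT_def)
  have "(\<lambda>j. (0::nat, j)) ` {1..<p} \<subseteq> TT p" by (auto simp: TT_def)
  then have "card ((\<lambda>j. (0::nat, j)) ` {1..<p}) \<le> card (TT p)" using fin card_mono by blast
  moreover have "card ((\<lambda>j. (0::nat, j)) ` {1..<p}) = p - 1" by (simp add: card_image inj_on_def)
  ultimately have L: "3 * k \<le> card (TT p)" by (simp add: p_def)
  define m where "m = card (TT p)"
  have m2: "2 \<le> m" using L k_def m_def by (simp add: power2_eq_square)
  obtain h where h: "bij_betw h {0..<m} (TT p)" using ex_bij_betw_nat_finite[OF fin] m_def by blast
  have "is_branch_decomp (TT p) (catN m) (catE m) h"
    unfolding is_branch_decomp_def using cat_tree[OF m2] cat_deg[OF m2] cat_leaves[OF m2] h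
    by (simp add: atLeast0LessThan)
  then have ne: "{w. \<exists>N TE \<beta>. is_branch_decomp (TT p) N TE \<beta> \<and> w = decomp_width (TT p) N TE \<beta>} \<noteq> {}"
    by blast
  have "n \<le> dbw (TT p)" unfolding dbw_def
    by (rule cInf_greatest[OF ne]) (use width_bound[OF _ k_def L] in blast)
  then show ?thesis using dag by blast
qed


end
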